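(* Let $r$ be a positive integer and let $(P,\mathcal{L})$ be an intersecting linear system of rank $r$ satisfying $\tau(P,\mathcal{L})=\nu_2(P,\mathcal{L})=r$. Then $(P,\mathcal{L})$ is $r$-uniform, i.e., every line has exactly $r$ points.
   Context: A linear system is a pair $(P,\mathcal{L})$ with $P$ a finite set of points and $\mathcal{L}$ a family of subsets of $P$ (lines) such that any two distinct lines share at most one point; it is intersecting if any two distinct lines share exactly one point. The rank is the maximum cardinality of a line. A transversal is a set of points meeting every line; $\tau$ is the minimum size of a transversal. A 2-packing is a set of lines no three of which share a common point; $\nu_2$ is its maximum size. *)

theory Defs
  imports Main
begin

definition linear_system :: "'a set \<Rightarrow> 'a set set \<Rightarrow> bool" where
  "linear_system P L \<longleftrightarrow> finite P \<and> (\<forall>l\<in>L. l \<subseteq> P) \<and>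
     (\<forall>l\<in>L. \<forall>m\<in>L. l \<noteq> m \<longrightarrow> card (l \<inter> m) \<le> 1)"

definition intersecting :: "'a set \<Rightarrow> 'a set set \<Rightarrow> bool" where
  "intersecting P L \<longleftrightarrow> linear_system P L \<and>
     (\<forall>l\<in>L. \<forall>m\<in>L. l \<noteq> m \<longrightarrow> card (l \<inter> m) = 1)"

definition rank :: "'a set set \<Rightarrow> nat" where
  "rank L = Max (card ` L)"

definition transversal :: "'a set \<Rightarrow> 'a set set \<Rightarrow> 'a set \<Rightarrow> bool" where
  "transversal P L T \<longleftrightarrow> T \<subseteq> P \<and> (\<forall>l\<in>L. T \<inter> l \<noteq> {})"

definition tau :: "'a set \<Rightarrow> 'a set set \<Rightarrow> nat" where
  "tau P L = Min {card T | T. transversal P L T}"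

definition two_packing :: "'a set set \<Rightarrow> 'a set set \<Rightarrow> bool" where
  "two_packing L S \<longleftrightarrow> S \<subseteq> L \<and>
     (\<forall>a\<in>S. \<forall>b\<in>S. \<forall>c\<in>S. a \<noteq> b \<and> a \<noteq> c \<and> b \<noteq> c \<longrightarrow> a \<inter> b \<inter> c = {})"

definition nu2 :: "'a set set \<Rightarrow> nat" where
  "nu2 L = Max {card S | S. two_packing L S}"

end

theory Submission
  imports Defs
begin

theorem lemma4p1:
  fixes P :: "'a set" and L :: "'a set set" and r :: nat
  assumes "r > 0"
    and "intersecting P L"
    and "rank L = r"
    and "tau P L = r"
    and "nu2 L = r"
  shows "\<forall>l\<in>L. card l = r"
proof
  fix l assume lL: "l \<in> L"
  have ls: "linear_system P L" using assms(2) unfolding intersecting_def by blast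
  hence fP: "finite P" and sub: "\<forall>l\<in>L. l \<subseteq> P" unfolding linear_system_def by auto
  have fL: "finite L" using sub fP by (meson Pow_iff finite_Pow_iff finite_subset subsetI)
  have le: "card l \<le> r" using assms(3) fL lL unfolding rank_def by (metis Max_ge finite_imageI imageI)
  have ne: "l \<noteq> {}"
  proof
    assume e: "l = {}"
    have "L = {{}}"
    proof -
      have "\<forall>m\<in>L. m = l"
        using assms(2) lL e unfolding intersecting_def by fastforce
      thus ?thesis using lL e by auto
    qed
    hence "rank L = 0" unfolding rank_def by simp
    thus False using assms(1,3) by simp
  qed
  have tr: "transversal P L l"
    unfolding transversal_def
  proof (intro conjI ballI)
    show "l \<subseteq> P" using sub lL by blast
    fix m assume mL: "m \<in> L"
    show "l \<inter> m \<noteq> {}"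
    proof (cases "m = l")
      case True thus ?thesis using ne by simp
    next
      case False
      hence "card (l \<inter> m) = 1" using assms(2) lL mL unfolding intersecting_def by metis
      thus ?thesis by auto
    qed
  qed
  have fin: "finite {card T | T. transversal P L T}"
  proof (rule finite_subset)
    show "{card T | T. transversal P L T} \<subseteq> card ` Pow P" unfolding transversal_def by auto
    show "finite (card ` Pow P)" using fP by simp
  qed
  have "tau P L \<le> card l" unfolding tau_def using fin tr by (auto intro: Min_le)
  thus "card l = r" using le assms(4) by simp
qed

end
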